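(* Let $\Omega$ be a finite set, $K\ge1$, $A$ a symmetric real $|\Omega|\times|\Omega|$ matrix, $w\in\mathbb{R}^{\Omega}$ with $w_p>0$ for all $p$, and $W=\mathrm{diag}(w)$. For nonzero $X\in\{0,1\}^{\Omega}$ let $e(X)=-\frac{X'AX}{w'X}$ and $\nabla e(X)=w\frac{X'AX}{(w'X)^2}-AX\frac{2}{w'X}$. For labelings $S:\Omega\to\{1,\dots,K\}$ with all segments $S^k$ (identified with indicator vectors) nonempty let $E_A(S)=\sum_k e(S^k)$. Fix such a labeling $S_t$ and for $\delta\in\mathbb{R}$ define $$B_t(S,\delta)=\sum_{k}\nabla e(S^k_t)'S^k+\delta\sum_k\frac{(\mathbf{1}-2S^k_t)'WS^k}{w'S^k_t}.$$ Then for every $\delta\ge-\lambda_0(W^{-1/2}AW^{-1/2})$, where $\lambda_0$ denotes the smallest eigenvalue, $B_t(\cdot,\delta)+K\delta$ is an auxiliary function for $E_A$ at $S_t$; in particular $\{B_t(\cdot,\delta)+K\delta\}_{\delta\in\mathbb{R}}$ is a pseudo-bound for $E_A$ at $S_t$. Moreover, for any factors $c\in\mathcal{F}$ (subsets of $\Omega$), arbitrary real potentials $E_c(S_c)$ and $\gamma\in\mathbb{R}$, the same holds for $B_t(S,\delta)+K\delta+\gamma\sum_{c\in\mathcal{F}}E_c(S_c)$ with respect to the joint energy $E_A(S)+\gamma\sum_{c\in\mathcal{F}}E_c(S_c)$.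
   Context: An auxiliary function for $E$ at $S_t$ is a function $a$ with $E(S)\le a(S)$ for all admissible $S$ and $E(S_t)=a(S_t)$. A family $B(S,\delta)$ indexed by a real parameter $\delta$ is a pseudo-bound for $E$ at $S_t$ if there is at least one $\delta'$ for which $B(\cdot,\delta')$ is an auxiliary function for $E$ at $S_t$. $\mathbf{1}$ is the all-ones vector. *)

theory Defs
  imports "HOL-Analysis.Analysis"
begin

text \<open>Omega is the finite index type 'n; vectors in R^Omega are real^'n,
 matrices are real^'n^'n. Labels are natural numbers 1..K.\<close>

definition diag_mat :: "real^'n \<Rightarrow> real^'n^'n" where
  "diag_mat w = (\<chi> i j. if i = j then w $ i else 0)"

definition eigenvalues :: "real^'n^'n \<Rightarrow> real set" where
  "eigenvalues M = {l. \<exists>v. v \<noteq> 0 \<and> M *v v = l *\<^sub>R v}"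

definition lambda_min :: "real^'n^'n \<Rightarrow> real" where
  "lambda_min M = Min (eigenvalues M)"

definition seg :: "('n::finite \<Rightarrow> nat) \<Rightarrow> nat \<Rightarrow> real^'n" where
  "seg S k = (\<chi> p. if S p = k then 1 else 0)"

definition e_fun :: "real^'n^'n \<Rightarrow> real^'n \<Rightarrow> real^'n \<Rightarrow> real" where
  "e_fun A w X = - (X \<bullet> (A *v X)) / (w \<bullet> X)"

definition grad_e :: "real^'n^'n \<Rightarrow> real^'n \<Rightarrow> real^'n \<Rightarrow> real^'n" where
  "grad_e A w X = ((X \<bullet> (A *v X)) / (w \<bullet> X)^2) *\<^sub>R w - (2 / (w \<bullet> X)) *\<^sub>R (A *v X)"

definition admissible :: "nat \<Rightarrow> ('n::finite \<Rightarrow> nat) \<Rightarrow> bool" where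
  "admissible K S \<longleftrightarrow> (\<forall>p. S p \<in> {1..K}) \<and> (\<forall>k\<in>{1..K}. \<exists>p. S p = k)"

definition E_A :: "real^'n^'n \<Rightarrow> real^'n \<Rightarrow> nat \<Rightarrow> ('n::finite \<Rightarrow> nat) \<Rightarrow> real" where
  "E_A A w K S = (\<Sum>k=1..K. e_fun A w (seg S k))"

definition B_t :: "real^'n^'n \<Rightarrow> real^'n \<Rightarrow> nat \<Rightarrow> ('n::finite \<Rightarrow> nat)
    \<Rightarrow> ('n \<Rightarrow> nat) \<Rightarrow> real \<Rightarrow> real" where
  "B_t A w K St S \<delta> =
     (\<Sum>k=1..K. grad_e A w (seg St k) \<bullet> seg S k)
     + \<delta> * (\<Sum>k=1..K. ((vec 1 - 2 *\<^sub>R seg St k) \<bullet> (diag_mat w *v seg S k)) / (w \<bullet> seg St k))"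

definition auxiliary :: "nat \<Rightarrow> (('n::finite \<Rightarrow> nat) \<Rightarrow> real) \<Rightarrow> (('n \<Rightarrow> nat) \<Rightarrow> real)
    \<Rightarrow> ('n \<Rightarrow> nat) \<Rightarrow> bool" where
  "auxiliary K E a St \<longleftrightarrow> (\<forall>S. admissible K S \<longrightarrow> E S \<le> a S) \<and> E St = a St"

definition pseudo_bound :: "nat \<Rightarrow> (('n::finite \<Rightarrow> nat) \<Rightarrow> real) \<Rightarrow> (('n \<Rightarrow> nat) \<Rightarrow> real \<Rightarrow> real)
    \<Rightarrow> ('n \<Rightarrow> nat) \<Rightarrow> bool" where
  "pseudo_bound K E B St \<longleftrightarrow> (\<exists>\<delta>'. auxiliary K E (\<lambda>S. B S \<delta>') St)"

end

theory Submission
  imports Defs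
begin

lemma quad_sym:
  fixes M :: "real^'n::finite^'n"
  assumes sym: "\<And>i j. M$i$j = M$j$i"
  shows "x \<bullet> (M *v y) = y \<bullet> (M *v x)"
proof -
  have "x \<bullet> (M *v y) = (\<Sum>i\<in>UNIV. \<Sum>j\<in>UNIV. x$i * M$i$j * y$j)"
    by (simp add: inner_vec_def matrix_vector_mult_def sum_distrib_left mult.assoc)
  also have "\<dots> = (\<Sum>j\<in>UNIV. \<Sum>i\<in>UNIV. x$i * M$i$j * y$j)" by (rule sum.swap)
  also have "\<dots> = y \<bullet> (M *v x)"
    by (simp add: inner_vec_def matrix_vector_mult_def sum_distrib_left sym mult.commute mult.left_commute)
  finally show ?thesis .
qed

lemma eig_finite:
  fixes M :: "real^'n::finite^'n"
  assumes sym: "\<And>i j. M$i$j = M$j$i"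
  shows "finite (eigenvalues M)"
proof -
  define g where "g l = (SOME v. v \<noteq> 0 \<and> M *v v = l *\<^sub>R v)" for l
  have g: "g l \<noteq> 0 \<and> M *v g l = l *\<^sub>R g l" if "l \<in> eigenvalues M" for l
  proof -
    have "\<exists>v. v \<noteq> 0 \<and> M *v v = l *\<^sub>R v" using that by (simp add: eigenvalues_def)
    then show ?thesis unfolding g_def by (rule someI_ex)
  qed
  have inj: "inj_on g (eigenvalues M)"
  proof (rule inj_onI)
    fix a b assume a: "a \<in> eigenvalues M" and b: "b \<in> eigenvalues M" and e: "g a = g b"
    have "a *\<^sub>R g a = b *\<^sub>R g a" using g[OF a] g[OF b] e by metis
    then have "(a - b) *\<^sub>R g a = 0" by (simp add: algebra_simps)
    then show "a = b" using g[OF a] by simp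
  qed
  have orth: "pairwise orthogonal (g ` eigenvalues M)"
    unfolding pairwise_def
  proof (clarify)
    fix a b assume a: "a \<in> eigenvalues M" and b: "b \<in> eigenvalues M" and ne: "g a \<noteq> g b"
    then have ab: "a \<noteq> b" by auto
    have "a * (g b \<bullet> g a) = g b \<bullet> (M *v g a)" using g[OF a] by simp
    also have "\<dots> = g a \<bullet> (M *v g b)" by (rule quad_sym[OF sym])
    also have "\<dots> = b * (g a \<bullet> g b)" using g[OF b] by simp
    finally have "(a - b) * (g a \<bullet> g b) = 0" by (simp add: inner_commute algebra_simps)
    then show "orthogonal (g a) (g b)" using ab by (simp add: orthogonal_def)
  qed
  have "0 \<notin> g ` eigenvalues M" using g by auto
  then have "independent (g ` eigenvalues M)"
    using pairwise_orthogonal_independent orth by blast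
  then have "finite (g ` eigenvalues M)" by (rule independent_imp_finite)
  then show ?thesis using finite_imageD inj by blast
qed

lemma quad_ineq_zero:
  fixes a b :: real
  assumes "a \<ge> 0" "\<And>t. 2*t*a + t^2*b \<ge> 0"
  shows "a = 0"
proof (rule ccontr)
  assume "a \<noteq> 0" then have ap: "a > 0" using assms by simp
  define sc where "sc = 1 / (\<bar>b\<bar> + 1)"
  have sp: "sc > 0" unfolding sc_def by simp
  have sb: "sc * b < 1" unfolding sc_def by (simp add: field_simps abs_if)
  define t0 where "t0 = - (a * sc)"
  have "2*t0*a + t0^2*b \<ge> 0" by (rule assms(2))
  moreover have "2*t0*a + t0^2*b = a * a * sc * (sc * b - 2)" unfolding t0_def by (simp add: power2_eq_square algebra_simps)
  moreover have "a * a * sc * (sc * b - 2) < 0" using ap sp sb by (simp add: mult_pos_neg)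
  ultimately show False by linarith
qed

lemma min_eig:
  fixes M :: "real^'n::finite^'n"
  assumes sym: "\<And>i j. M$i$j = M$j$i"
  shows "\<exists>\<mu>\<in>eigenvalues M. \<forall>v. v \<bullet> (M *v v) \<ge> \<mu> * (v \<bullet> v)"
proof -
  let ?q = "\<lambda>v. v \<bullet> (M *v v)"
  have "continuous_on (sphere 0 1) ?q"
    by (intro continuous_intros linear_continuous_on bounded_linear_inner_left) 
       (simp add: linear_continuous_on)
  moreover have "sphere (0::real^'n) 1 \<noteq> {}" by simp
  ultimately obtain v0 where v0: "v0 \<in> sphere 0 1" and mn: "\<And>y. y \<in> sphere 0 1 \<Longrightarrow> ?q v0 \<le> ?q y"
    using continuous_attains_inf[OF compact_sphere] by blast
  define \<mu> where "\<mu> = ?q v0"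
  have nv0: "v0 \<bullet> v0 = 1" using v0 by (simp add: dot_square_norm)
  have hom: "?q v \<ge> \<mu> * (v \<bullet> v)" for v
  proof (cases "v = 0")
    case True then show ?thesis by simp
  next
    case False
    define u where "u = (1 / norm v) *\<^sub>R v"
    have "u \<in> sphere 0 1" using False unfolding u_def by simp
    then have "\<mu> \<le> ?q u" using mn unfolding \<mu>_def by blast
    moreover have "?q v = (norm v)^2 * ?q u" "v \<bullet> v = (norm v)^2"
      using False unfolding u_def by (simp_all add: matrix_vector_mult_scaleR power2_eq_square dot_square_norm)
    ultimately show ?thesis by (metis mult.commute mult_right_mono zero_le_power2)
  qed
  define r where "r = M *v v0 - \<mu> *\<^sub>R v0"
  have "2*t*(r \<bullet> r) + t^2*(?q r - \<mu> * (r \<bullet> r)) \<ge> 0" for t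
  proof -
    have h: "?q (v0 + t *\<^sub>R r) \<ge> \<mu> * ((v0 + t *\<^sub>R r) \<bullet> (v0 + t *\<^sub>R r))" by (rule hom)
    have s1: "v0 \<bullet> (M *v r) = r \<bullet> (M *v v0)" by (rule quad_sym[OF sym])
    have eq: "r \<bullet> (M *v v0) = r \<bullet> r + \<mu> * (r \<bullet> v0)" unfolding r_def
      by (simp add: inner_diff_right)
    have e2: "t * (2 * (r \<bullet> (M *v v0))) = t * (r \<bullet> r * 2) + t * (r \<bullet> v0 * (2 * \<mu>))"
      using eq by (simp add: algebra_simps)
    have "t * (t * (r \<bullet> r * \<mu>)) + t * (r \<bullet> v0 * (2 * \<mu>))
      \<le> t * (t * (r \<bullet> (M *v r))) + t * (2 * (r \<bullet> (M *v v0)))"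
      using h s1 nv0
      by (simp add: algebra_simps inner_add_left inner_add_right matrix_vector_right_distrib
                    matrix_vector_mult_scaleR power2_eq_square inner_commute \<mu>_def)
    then show ?thesis using e2 by (simp add: algebra_simps power2_eq_square)
  qed
  then have "r \<bullet> r = 0" by (intro quad_ineq_zero) auto
  then have "M *v v0 = \<mu> *\<^sub>R v0" unfolding r_def by simp
  moreover have "v0 \<noteq> 0" using v0 by auto
  ultimately have "\<mu> \<in> eigenvalues M" unfolding eigenvalues_def by auto
  then show ?thesis using hom by blast
qed

lemma lmin_bound:
  fixes M :: "real^'n::finite^'n"
  assumes sym: "\<And>i j. M$i$j = M$j$i"
  shows "v \<bullet> (M *v v) \<ge> lambda_min M * (v \<bullet> v)"
proof -
  obtain \<mu> where m: "\<mu> \<in> eigenvalues M" "\<And>v. v \<bullet> (M *v v) \<ge> \<mu> * (v \<bullet> v)"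
    using min_eig[OF sym] by blast
  have "lambda_min M \<le> \<mu>" unfolding lambda_min_def using eig_finite[OF sym] m(1) by simp
  then have "lambda_min M * (v \<bullet> v) \<le> \<mu> * (v \<bullet> v)" by (simp add: mult_right_mono)
  then show ?thesis using m(2)[of v] by linarith
qed


lemma quad_expand:
  fixes B :: "real^'n::finite^'n"
  shows "x \<bullet> (B *v y) = (\<Sum>i\<in>UNIV. \<Sum>j\<in>UNIV. x$i * B$i$j * y$j)"
  by (simp add: inner_vec_def matrix_vector_mult_def sum_distrib_left mult.assoc)

lemma diag_mult: "diag_mat w *v x = (\<chi> p. w$p * x$p)"
proof -
  have "(\<Sum>j\<in>UNIV. (if p = j then w$p else 0) * x$j) = w$p * x$p" for p
  proof -
    have "(\<Sum>j\<in>UNIV. (if p = j then w$p else 0) * x$j) = (\<Sum>j\<in>UNIV. if p = j then w$p * x$j else 0)"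
      by (rule sum.cong) auto
    then show ?thesis by simp
  qed
  then show ?thesis by (simp add: diag_mat_def matrix_vector_mult_def vec_eq_iff)
qed

lemma M_entry:
  fixes d :: "real^'n::finite"
  shows "(diag_mat d ** A ** diag_mat d)$i$j = d$i * A$i$j * d$j"
proof -
  have l1: "(diag_mat d ** A)$i$k = d$i * A$i$k" for k
  proof -
    have "(\<Sum>m\<in>UNIV. (if i = m then d$i else 0) * A$m$k) = (\<Sum>m\<in>UNIV. if i = m then d$i * A$m$k else 0)"
      by (rule sum.cong) auto
    then show ?thesis by (simp add: diag_mat_def matrix_matrix_mult_def)
  qed
  have "(\<Sum>k\<in>UNIV. (d$i * A$i$k) * (if k = j then d$k else 0)) = (\<Sum>k\<in>UNIV. if k = j then d$i * A$i$j * d$j else 0)"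
    by (rule sum.cong) auto
  then show ?thesis using l1 by (simp add: diag_mat_def matrix_matrix_mult_def)
qed

lemma psd:
  fixes A :: "real^'n::finite^'n" and w :: "real^'n"
  assumes symA: "transpose A = A" and wp: "\<forall>p. w $ p > 0"
    and M: "M = diag_mat (\<chi> p. 1 / sqrt (w $ p)) ** A ** diag_mat (\<chi> p. 1 / sqrt (w $ p))"
    and dl: "\<delta> \<ge> - lambda_min M"
  shows "Z \<bullet> (A *v Z) + \<delta> * (Z \<bullet> (diag_mat w *v Z)) \<ge> 0"
proof -
  have sA: "A$i$j = A$j$i" for i j using symA by (metis transpose_def vec_lambda_beta)
  have Me: "M$i$j = A$i$j / (sqrt (w$i) * sqrt (w$j))" for i j
    unfolding M M_entry by simp
  have sM: "M$i$j = M$j$i" for i j using Me sA by (simp add: mult.commute)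
  define v where "v = (\<chi> p. sqrt (w$p) * Z$p)"
  have sq: "sqrt (w$p) \<noteq> 0" for p using wp by (simp add: less_imp_neq[symmetric])
  have "v \<bullet> (M *v v) = Z \<bullet> (A *v Z)"
    unfolding quad_expand v_def Me using sq by (simp add: field_simps)
  moreover have "v \<bullet> v = Z \<bullet> (diag_mat w *v Z)"
    unfolding v_def diag_mult inner_vec_def using wp
    by (intro sum.cong) (auto simp: less_imp_le power2_eq_square[symmetric] power_mult_distrib)
  moreover have "Z \<bullet> (diag_mat w *v Z) \<ge> 0"
    unfolding diag_mult inner_vec_def using wp
    by (intro sum_nonneg) (simp add: less_imp_le mult.left_commute[of "Z$_"])
  moreover note lmin_bound[OF sM, of v]
  ultimately show ?thesis using dl mult_nonneg_nonneg[of "lambda_min M + \<delta>" "Z \<bullet> (diag_mat w *v Z)"]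
    by (simp add: algebra_simps)
qed

lemma scalar:
  fixes a b qX qY c d \<delta> :: real
  assumes a: "a > 0" and b: "b > 0"
    and h: "qX/a^2 - 2*c/(a*b) + qY/b^2 + \<delta>*(a/a^2 - 2*d/(a*b) + b/b^2) \<ge> 0"
  shows "- qX / a \<le> qY / b^2 * a - 2 / b * c + \<delta> * ((a - 2*d) / b) + \<delta>"
proof -
  have "a * (qX/a^2 - 2*c/(a*b) + qY/b^2 + \<delta>*(a/a^2 - 2*d/(a*b) + b/b^2)) \<ge> 0"
    using a h by simp
  moreover have "a * (qX/a^2 - 2*c/(a*b) + qY/b^2 + \<delta>*(a/a^2 - 2*d/(a*b) + b/b^2))
      = (qY / b^2 * a - 2 / b * c + \<delta> * ((a - 2*d) / b) + \<delta>) - (- qX / a)"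
    using a b by (simp add: field_simps power2_eq_square)
  ultimately show ?thesis by linarith
qed


lemma seg_ineq:
  fixes A :: "real^'n::finite^'n" and w X Y :: "real^'n"
  assumes symA: "transpose A = A"
    and P: "\<And>Z. Z \<bullet> (A *v Z) + \<delta> * (Z \<bullet> (diag_mat w *v Z)) \<ge> 0"
    and X01: "\<forall>p. X$p = 0 \<or> X$p = 1" and Y01: "\<forall>p. Y$p = 0 \<or> Y$p = 1"
    and a: "w \<bullet> X > 0" and b: "w \<bullet> Y > 0"
  shows "e_fun A w X \<le> grad_e A w Y \<bullet> X
           + \<delta> * (((vec 1 - 2 *\<^sub>R Y) \<bullet> (diag_mat w *v X)) / (w \<bullet> Y)) + \<delta>"
proof -
  have sA: "A$i$j = A$j$i" for i j using symA by (metis transpose_def vec_lambda_beta)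
  have sW: "diag_mat w $i$j = diag_mat w $j$i" for i j by (simp add: diag_mat_def)
  have WX: "U \<bullet> (diag_mat w *v U) = w \<bullet> U" if U01: "\<forall>p. U$p = 0 \<or> U$p = 1" for U
    unfolding diag_mult inner_vec_def
  proof (rule sum.cong)
    fix p show "U$p \<bullet> (\<chi> p. w$p * U$p)$p = w$p \<bullet> U$p" using U01[rule_format, of p] by auto
  qed simp
  have 1: "vec 1 \<bullet> (diag_mat w *v X) = w \<bullet> X"
    unfolding diag_mult inner_vec_def by simp
  define a' where "a' = w \<bullet> X"
  define b' where "b' = w \<bullet> Y"
  define qX where "qX = X \<bullet> (A *v X)"
  define qY where "qY = Y \<bullet> (A *v Y)"
  define c where "c = X \<bullet> (A *v Y)"
  define d where "d = Y \<bullet> (diag_mat w *v X)"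
  have cs: "Y \<bullet> (A *v X) = c" unfolding c_def by (rule quad_sym[OF sA])
  have ds: "X \<bullet> (diag_mat w *v Y) = d" unfolding d_def by (rule quad_sym[OF sW])
  have ap: "a' > 0" and bp: "b' > 0" using a b a'_def b'_def by auto
  define Z where "Z = (1/a') *\<^sub>R X - (1/b') *\<^sub>R Y"
  have ZA: "Z \<bullet> (A *v Z) = qX/a'^2 - 2*c/(a'*b') + qY/b'^2"
    unfolding Z_def using cs ap bp
    by (simp add: inner_diff_left inner_diff_right matrix_vector_mult_diff_distrib
        matrix_vector_mult_scaleR qX_def qY_def c_def power2_eq_square field_simps)
  have ZW: "Z \<bullet> (diag_mat w *v Z) = a'/a'^2 - 2*d/(a'*b') + b'/b'^2"
    unfolding Z_def using ds WX[OF X01] WX[OF Y01] ap bp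
    by (simp add: inner_diff_left inner_diff_right matrix_vector_mult_diff_distrib
        matrix_vector_mult_scaleR a'_def b'_def d_def power2_eq_square field_simps)
  have h: "qX/a'^2 - 2*c/(a'*b') + qY/b'^2 + \<delta>*(a'/a'^2 - 2*d/(a'*b') + b'/b'^2) \<ge> 0"
    using P[of Z] ZA ZW by simp
  have s: "- qX / a' \<le> qY / b'^2 * a' - 2 / b' * c + \<delta> * ((a' - 2*d) / b') + \<delta>"
    by (rule scalar[OF _ _ h]) (use a b a'_def b'_def in auto)
  have g: "grad_e A w Y \<bullet> X = qY / b'^2 * a' - 2 / b' * c"
    unfolding grad_e_def qY_def b'_def a'_def c_def
    by (simp add: inner_diff_left inner_diff_right inner_commute)
  have n: "(vec 1 - 2 *\<^sub>R Y) \<bullet> (diag_mat w *v X) = a' - 2*d"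
    unfolding a'_def d_def using 1 by (simp add: inner_diff_left)
  show ?thesis unfolding e_fun_def g n using s by (simp add: qX_def a'_def b'_def)
qed

lemma seg_eq:
  fixes A :: "real^'n::finite^'n" and w Y :: "real^'n"
  assumes Y01: "\<forall>p. Y$p = 0 \<or> Y$p = 1" and b: "w \<bullet> Y > 0"
  shows "e_fun A w Y = grad_e A w Y \<bullet> Y
           + \<delta> * (((vec 1 - 2 *\<^sub>R Y) \<bullet> (diag_mat w *v Y)) / (w \<bullet> Y)) + \<delta>"
proof -
  have WY: "Y \<bullet> (diag_mat w *v Y) = w \<bullet> Y"
    unfolding diag_mult inner_vec_def
  proof (rule sum.cong)
    fix p show "Y$p \<bullet> (\<chi> p. w$p * Y$p)$p = w$p \<bullet> Y$p" using Y01[rule_format, of p] by auto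
  qed simp
  have 1: "vec 1 \<bullet> (diag_mat w *v Y) = w \<bullet> Y"
    unfolding diag_mult inner_vec_def by simp
  have n: "(vec 1 - 2 *\<^sub>R Y) \<bullet> (diag_mat w *v Y) = - (w \<bullet> Y)"
    using 1 WY by (simp add: inner_diff_left)
  show ?thesis unfolding e_fun_def grad_e_def n using b
    by (simp add: inner_diff_left inner_diff_right inner_commute power2_eq_square field_simps)
qed


lemma seg01: "\<forall>p. seg S k $ p = 0 \<or> seg S k $ p = 1"
  by (simp add: seg_def)

lemma seg_pos:
  assumes wp: "\<forall>p. w $ p > 0" and adm: "admissible K S" and k: "k \<in> {1..K}"
  shows "w \<bullet> seg S k > 0"
proof -
  obtain p0 where p0: "S p0 = k" using adm k unfolding admissible_def by blast
  have "w \<bullet> seg S k = (\<Sum>p\<in>UNIV. (if S p = k then w$p else 0))"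
    unfolding inner_vec_def seg_def by (intro sum.cong) auto
  also have "\<dots> \<ge> (if S p0 = k then w$p0 else 0)"
    by (rule member_le_sum) (use wp in \<open>auto simp: less_imp_le\<close>)
  finally show ?thesis using p0 wp by (smt (verit))
qed

lemma sum_split3:
  fixes f g h :: "nat \<Rightarrow> real"
  shows "(\<Sum>k=1..K. f k + \<delta> * g k + \<delta>) = (\<Sum>k=1..K. f k) + \<delta> * (\<Sum>k=1..K. g k) + real K * \<delta>"
  by (simp add: sum.distrib sum_distrib_left)

lemma aux_main:
  fixes A :: "real^'n::finite^'n" and w :: "real^'n"
  assumes symA: "transpose A = A" and wp: "\<forall>p. w $ p > 0" and adm: "admissible K St"
    and P: "\<And>Z. Z \<bullet> (A *v Z) + \<delta> * (Z \<bullet> (diag_mat w *v Z)) \<ge> 0"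
  shows "(\<forall>S::'n\<Rightarrow>nat. admissible K S \<longrightarrow> E_A A w K S \<le> B_t A w K St S \<delta> + real K * \<delta>)
       \<and> E_A A w K St = B_t A w K St St \<delta> + real K * \<delta>"
proof (intro conjI allI impI)
  fix S :: "'n \<Rightarrow> nat" assume aS: "admissible K S"
  have "E_A A w K S \<le> (\<Sum>k=1..K. grad_e A w (seg St k) \<bullet> seg S k
      + \<delta> * (((vec 1 - 2 *\<^sub>R seg St k) \<bullet> (diag_mat w *v seg S k)) / (w \<bullet> seg St k)) + \<delta>)"
    unfolding E_A_def
    by (intro sum_mono seg_ineq[OF symA P seg01 seg01] seg_pos[OF wp aS] seg_pos[OF wp adm])
  also have "\<dots> = B_t A w K St S \<delta> + real K * \<delta>"
    unfolding B_t_def by (rule sum_split3)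
  finally show "E_A A w K S \<le> B_t A w K St S \<delta> + real K * \<delta>" .
next
  have "E_A A w K St = (\<Sum>k=1..K. grad_e A w (seg St k) \<bullet> seg St k
      + \<delta> * (((vec 1 - 2 *\<^sub>R seg St k) \<bullet> (diag_mat w *v seg St k)) / (w \<bullet> seg St k)) + \<delta>)"
    unfolding E_A_def
    by (intro sum.cong refl seg_eq[OF seg01] seg_pos[OF wp adm])
  also have "\<dots> = B_t A w K St St \<delta> + real K * \<delta>"
    unfolding B_t_def by (rule sum_split3)
  finally show "E_A A w K St = B_t A w K St St \<delta> + real K * \<delta>" .
qed

theorem theorem4:
  fixes A :: "real^'n::finite^'n" and w :: "real^'n" and K :: nat
    and St :: "'n \<Rightarrow> nat"
    and F :: "'n set set" and Ec :: "'n set \<Rightarrow> ('n \<Rightarrow> nat) \<Rightarrow> real" and \<gamma> :: real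
  assumes "K \<ge> 1"
    and "transpose A = A"
    and "\<forall>p. w $ p > 0"
    and "admissible K St"
  defines "M \<equiv> diag_mat (\<chi> p. 1 / sqrt (w $ p)) ** A ** diag_mat (\<chi> p. 1 / sqrt (w $ p))"
  defines "J \<equiv> (\<lambda>S. E_A A w K S + \<gamma> * (\<Sum>c\<in>F. Ec c (restrict S c)))"
  shows "(\<forall>\<delta>. \<delta> \<ge> - lambda_min M \<longrightarrow>
            auxiliary K (E_A A w K) (\<lambda>S. B_t A w K St S \<delta> + real K * \<delta>) St)
       \<and> pseudo_bound K (E_A A w K) (\<lambda>S \<delta>. B_t A w K St S \<delta> + real K * \<delta>) St
       \<and> (\<forall>\<delta>. \<delta> \<ge> - lambda_min M \<longrightarrow>
            auxiliary K J (\<lambda>S. B_t A w K St S \<delta> + real K * \<delta>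
                             + \<gamma> * (\<Sum>c\<in>F. Ec c (restrict S c))) St)
       \<and> pseudo_bound K J (\<lambda>S \<delta>. B_t A w K St S \<delta> + real K * \<delta>
                             + \<gamma> * (\<Sum>c\<in>F. Ec c (restrict S c))) St"
proof -
  have main: "(\<forall>S::'n\<Rightarrow>nat. admissible K S \<longrightarrow> E_A A w K S \<le> B_t A w K St S \<delta> + real K * \<delta>)
       \<and> E_A A w K St = B_t A w K St St \<delta> + real K * \<delta>" if d: "\<delta> \<ge> - lambda_min M" for \<delta>
    by (rule aux_main[OF assms(2,3,4) psd[OF assms(2,3) M_def[THEN meta_eq_to_obj_eq] d]])
  have a1: "\<forall>\<delta>. \<delta> \<ge> - lambda_min M \<longrightarrow>
            auxiliary K (E_A A w K) (\<lambda>S. B_t A w K St S \<delta> + real K * \<delta>) St"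
    using main unfolding auxiliary_def by blast
  have a2: "\<forall>\<delta>. \<delta> \<ge> - lambda_min M \<longrightarrow>
            auxiliary K J (\<lambda>S. B_t A w K St S \<delta> + real K * \<delta>
                             + \<gamma> * (\<Sum>c\<in>F. Ec c (restrict S c))) St"
    using main unfolding auxiliary_def J_def by fastforce
  show ?thesis using a1 a2 unfolding pseudo_bound_def by blast
qed

end
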